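(* Let $M$ be an $n$-counter Minsky machine and $k_1,\dots,k_n$ non-negative integers, and suppose $M$ can go from the initial configuration $(L_1,k_1,\dots,k_n)$ to the halting configuration $(L_0,0,\dots,0)$. Then there exists a tree-like Horn program $P$ which is a strong solution to the sequent $$l_1\otimes r_1^{k_1}\otimes\cdots\otimes r_n^{k_n},\ !\Phi_M,\ !\mathcal{K}\ \vdash\ l_0.$$
   Context: An $n$-counter Minsky machine $M$ has counters $x_1,\dots,x_n$ with non-negative integer values and a finite list of instructions labelled by labels $L_0,L_1,\dots$, each of one of the forms: (1) $L_i: x_m:=x_m+1$; goto $L_j$; (2) $L_i: x_m:=x_m-1$; goto $L_j$; (3) $L_i$: if $x_m>0$ then goto $L_j$; (4) $L_i$: if $x_m=0$ then goto $L_j$; (5) $L_0$: halt; where $i\ge 1$. A configuration is $(L,c_1,\dots,c_n)$; a computation is a finite sequence of configurations each obtained from the previous by applying an instruction of $M$ (an instruction at $L_i$ applies only in a configuration with label $L_i$; type (2) requires $x_m\ge1$, type (3) requires $x_m>0$, type (4) requires $x_m=0$). Encoding: distinct propositional literals $r_1,\dots,r_n$, $l_0,l_1,\dots$ (one per label), $\kappa_1,\dots,\kappa_n$. $r^k$ denotes the tensor of $k$ copies of $r$ (omitted when $k=0$). Instruction $I$ of type (1)–(4) gives: $\varphi_{(1)}=l_i\multimap(l_j\otimes r_m)$, $\varphi_{(2)}=(l_i\otimes r_m)\multimap l_j$, $\varphi_{(3)}=(l_i\otimes r_m)\multimap(l_j\otimes r_m)$, $\varphi_{(4)}=l_i\multimap(l_j\oplus\kappa_m)$.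 $\Phi_M$ is the multiset of $\varphi_I$ over the instructions $I$ of $M$ of types (1)–(4). $\mathcal{K}=\bigcup_{m=1}^n\mathcal{K}_m$, where $\mathcal{K}_m$ consists of $\kappa_m\multimap l_0$ and $(\kappa_m\otimes r_i)\multimap\kappa_m$ for all $i\neq m$. A tree-like Horn program is a finite rooted tree (each vertex at most two children) with edges labelled by Horn implications $X\multimap Y$ ($X,Y$ tensor products of one or more literals, $\otimes$ commutative and associative), such that each vertex with two outgoing edges has them labelled $X\multimap Y_1$, $X\multimap Y_2$ with the same $X$. For a product $W$: $\mathrm{OUT}(P,W,\text{root})=W$; for an edge $(v,w)$ labelled $X\multimap Y$, if $\mathrm{OUT}(P,W,v)$ equals $X\otimes V$ as multisets for some (possibly empty) product $V$, then $\mathrm{OUT}(P,W,w)=Y\otimes V$, else undefined. The formula used on an edge out of a one-child vertex is its label; on each edge out of a two-child vertex with labels $X\multimap Y_1$, $X\multimap Y_2$ it is $X\multimap(Y_1\oplus Y_2)$. $P$ is a strong solution to $W,\Delta,!\Gamma\vdash Z$ if every terminal vertex $w$ has $\mathrm{OUT}(P,W,w)$ defined and equal as a multiset to $Z$, every edge's used formula lies in $\Gamma$ or $\Delta$, and on every root-to-terminal path each formula of $\Delta$ (with multiplicity) is used exactly once. (Here $\Delta$ is empty.) *)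

theory Defs
  imports Main "HOL-Library.Multiset"
begin

text \<open>Labels L_i are represented by natural numbers i; counters are numbered 1..n.
  Inc i m j :  L_i: x_m := x_m + 1; goto L_j
  Dec i m j :  L_i: x_m := x_m - 1; goto L_j
  JPos i m j:  L_i: if x_m > 0 then goto L_j
  JZ i m j  :  L_i: if x_m = 0 then goto L_j
  Halt      :  L_0: halt\<close>

datatype instr =
    Inc nat nat nat
  | Dec nat nat nat
  | JPos nat nat nat
  | JZ nat nat nat
  | Halt

record minsky =
  ncount :: nat
  instrs :: "instr list"

definition instr_wf :: "nat \<Rightarrow> instr \<Rightarrow> bool" where
  "instr_wf n I = (case I of
      Inc i m j \<Rightarrow> i \<ge> 1 \<and> 1 \<le> m \<and> m \<le> n
    | Dec i m j \<Rightarrow> i \<ge> 1 \<and> 1 \<le> m \<and> m \<le> n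
    | JPos i m j \<Rightarrow> i \<ge> 1 \<and> 1 \<le> m \<and> m \<le> n
    | JZ i m j \<Rightarrow> i \<ge> 1 \<and> 1 \<le> m \<and> m \<le> n
    | Halt \<Rightarrow> True)"

definition minsky_wf :: "minsky \<Rightarrow> bool" where
  "minsky_wf M = (\<forall>I \<in> set (instrs M). instr_wf (ncount M) I)"

text \<open>A configuration (L, c_1, ..., c_n) is a pair of a label and a list of length n;
  the value of counter x_m is the list entry at position m - 1.\<close>
type_synonym config = "nat \<times> nat list"

fun instr_step :: "instr \<Rightarrow> config \<Rightarrow> config \<Rightarrow> bool" where
  "instr_step (Inc i m j) (L, c) (L', c') =
     (L = i \<and> L' = j \<and> c' = c[m - 1 := c ! (m - 1) + 1])"
| "instr_step (Dec i m j) (L, c) (L', c') =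
     (L = i \<and> L' = j \<and> c ! (m - 1) \<ge> 1 \<and> c' = c[m - 1 := c ! (m - 1) - 1])"
| "instr_step (JPos i m j) (L, c) (L', c') =
     (L = i \<and> L' = j \<and> c ! (m - 1) > 0 \<and> c' = c)"
| "instr_step (JZ i m j) (L, c) (L', c') =
     (L = i \<and> L' = j \<and> c ! (m - 1) = 0 \<and> c' = c)"
| "instr_step Halt _ _ = False"

definition mstep :: "minsky \<Rightarrow> config \<Rightarrow> config \<Rightarrow> bool" where
  "mstep M C C' = (\<exists>I \<in> set (instrs M). instr_step I C C')"

definition reaches :: "minsky \<Rightarrow> config \<Rightarrow> config \<Rightarrow> bool" where
  "reaches M C C' = (mstep M)\<^sup>*\<^sup>* C C'"

datatype lit = r nat | l nat | kap nat

text \<open>Tensor products of literals are multisets of literals (tensor is commutative and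
  associative). Formulas occurring in !Gamma: Horn implications X -o Y, and
  X -o (Y1 (+) Y2).\<close>
datatype fml =
    Imp "lit multiset" "lit multiset"
  | ImpPlus "lit multiset" "lit multiset" "lit multiset"

fun phi :: "instr \<Rightarrow> fml" where
  "phi (Inc i m j) = Imp {#l i#} {#l j, r m#}"
| "phi (Dec i m j) = Imp {#l i, r m#} {#l j#}"
| "phi (JPos i m j) = Imp {#l i, r m#} {#l j, r m#}"
| "phi (JZ i m j) = ImpPlus {#l i#} {#l j#} {#kap m#}"
| "phi Halt = Imp {#l 0#} {#l 0#}" \<comment> \<open>never used: Halt is excluded from Phi_M\<close>

definition is_halt :: "instr \<Rightarrow> bool" where
  "is_halt I = (I = Halt)"

definition PhiM :: "minsky \<Rightarrow> fml set" where
  "PhiM M = phi ` {I \<in> set (instrs M). \<not> is_halt I}"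

definition Kset :: "nat \<Rightarrow> nat \<Rightarrow> fml set" where
  "Kset n m = {Imp {#kap m#} {#l 0#}} \<union>
              {Imp {#kap m, r i#} {#kap m#} | i. 1 \<le> i \<and> i \<le> n \<and> i \<noteq> m}"

definition Kall :: "nat \<Rightarrow> fml set" where
  "Kall n = (\<Union>m \<in> {1..n}. Kset n m)"

definition init_prod :: "nat list \<Rightarrow> lit multiset" where
  "init_prod ks = {#l 1#} + (\<Sum>m \<in> {1..length ks}. replicate_mset (ks ! (m - 1)) (r m))"

text \<open>A finite rooted tree, each vertex with at most two children; edges are labelled by
  Horn implications. Step X Y P: a vertex with one outgoing edge labelled X -o Y leading to
  subtree P. Branch X Y1 P1 Y2 P2: a vertex with two outgoing edges labelled X -o Y1 and
  X -o Y2 (same X) leading to P1 and P2.\<close>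
datatype prog =
    Leaf
  | Step "lit multiset" "lit multiset" prog
  | Branch "lit multiset" "lit multiset" prog "lit multiset" prog

text \<open>P is a strong solution to W, !Gamma |- Z (with Delta empty): following the edges from
  the root starting with OUT(root) = W, OUT is defined at every vertex (the left-hand side X
  of each edge is a sub-multiset of the current product, which is replaced by Y),
  every terminal vertex has OUT = Z, every edge label is a Horn implication (nonempty
  products), and every used formula (X -o Y, resp. X -o (Y1 (+) Y2) at branching
  vertices) lies in Gamma.\<close>
fun strong_solution :: "prog \<Rightarrow> lit multiset \<Rightarrow> fml set \<Rightarrow> lit multiset \<Rightarrow> bool" where
  "strong_solution Leaf W \<Gamma> Z = (W = Z)"
| "strong_solution (Step X Y P) W \<Gamma> Z =
     (X \<noteq> {#} \<and> Y \<noteq> {#} \<and> X \<subseteq># W \<and> Imp X Y \<in> \<Gamma> \<and>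
      strong_solution P (W - X + Y) \<Gamma> Z)"
| "strong_solution (Branch X Y1 P1 Y2 P2) W \<Gamma> Z =
     (X \<noteq> {#} \<and> Y1 \<noteq> {#} \<and> Y2 \<noteq> {#} \<and> X \<subseteq># W \<and> ImpPlus X Y1 Y2 \<in> \<Gamma> \<and>
      strong_solution P1 (W - X + Y1) \<Gamma> Z \<and> strong_solution P2 (W - X + Y2) \<Gamma> Z)"

end

theory Submission
  imports Defs
begin

definition cnt :: "nat list \<Rightarrow> lit multiset" where
  "cnt c = (\<Sum>m \<in> {1..length c}. replicate_mset (c ! (m - 1)) (r m))"

lemma count_cnt: "count (cnt c) x = (case x of r m \<Rightarrow> if 1 \<le> m \<and> m \<le> length c then c!(m-1) else 0 | _ \<Rightarrow> 0)"
  by (cases x) (auto simp: cnt_def count_sum count_replicate_mset)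

lemma cnt_rep0: "cnt (replicate n 0) = {#}"
  by (auto simp: multiset_eq_iff count_cnt split: lit.splits)

lemma kap_elim:
  assumes "1 \<le> m" "m \<le> n" "\<forall>x \<in># R. \<exists>i. x = r i \<and> 1 \<le> i \<and> i \<le> n \<and> i \<noteq> m"
  shows "\<exists>P. strong_solution P ({#kap m#} + R) (PhiM M \<union> Kall n) {#l 0#}"
  using assms(3)
proof (induction R)
  case empty
  have "Imp {#kap m#} {#l 0#} \<in> Kall n" using assms(1,2) by (auto simp: Kall_def Kset_def)
  then show ?case by (intro exI[of _ "Step {#kap m#} {#l 0#} Leaf"]) auto
next
  case (add x R)
  then obtain P where P: "strong_solution P ({#kap m#} + R) (PhiM M \<union> Kall n) {#l 0#}" by auto
  from add.prems obtain i where i: "x = r i" "1 \<le> i" "i \<le> n" "i \<noteq> m" by auto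
  have "Imp {#kap m, r i#} {#kap m#} \<in> Kall n" using assms(1,2) i by (auto simp: Kall_def Kset_def)
  moreover have "{#kap m#} + add_mset x R - {#kap m, r i#} + {#kap m#} = {#kap m#} + R"
    using i by simp
  ultimately show ?case using P i
    by (intro exI[of _ "Step {#kap m, r i#} {#kap m#} P"]) auto
qed

lemma main:
  assumes wf: "minsky_wf M" and reach: "(mstep M)\<^sup>*\<^sup>* C (0, replicate (ncount M) 0)"
  shows "length (snd C) = ncount M \<longrightarrow>
     (\<exists>P. strong_solution P ({#l (fst C)#} + cnt (snd C)) (PhiM M \<union> Kall (ncount M)) {#l 0#})"
  using reach
proof (induction rule: converse_rtranclp_induct)
  case base
  then show ?case by (intro impI exI[of _ Leaf]) (simp add: cnt_rep0)
next
  case (step C C')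
  show ?case
  proof
    assume len: "length (snd C) = ncount M"
    obtain L c where C: "C = (L, c)" by (cases C)
    obtain L' c' where C': "C' = (L', c')" by (cases C')
    from step.hyps(1) obtain I where I: "I \<in> set (instrs M)" "instr_step I C C'"
      by (auto simp: mstep_def)
    have wfI: "instr_wf (ncount M) I" using wf I(1) by (auto simp: minsky_wf_def)
    have nh: "\<not> is_halt I" using I(2) by (auto simp: is_halt_def)
    have inPhi: "phi I \<in> PhiM M" using I(1) nh by (auto simp: PhiM_def)
    let ?G = "PhiM M \<union> Kall (ncount M)"
    show "\<exists>P. strong_solution P ({#l (fst C)#} + cnt (snd C)) ?G {#l 0#}"
    proof (cases I)
      case (Inc i m j)
      with I(2) C C' have e: "L = i" "L' = j" "c' = c[m - 1 := c ! (m - 1) + 1]" by auto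
      have lc: "length c' = ncount M" using e len C by simp
      with step.IH C' obtain P where P: "strong_solution P ({#l L'#} + cnt c') ?G {#l 0#}" by auto
      have m: "1 \<le> m" "m \<le> length c" using wfI Inc len C by (auto simp: instr_wf_def)
      have eq: "{#l L#} + cnt c - {#l i#} + {#l j, r m#} = {#l L'#} + cnt c'"
        using m e by (auto simp: multiset_eq_iff count_cnt nth_list_update split: lit.splits)
      show ?thesis using P inPhi Inc C e eq
        by (intro exI[of _ "Step {#l i#} {#l j, r m#} P"]) auto
    next
      case (Dec i m j)
      with I(2) C C' have e: "L = i" "L' = j" "c ! (m - 1) \<ge> 1" "c' = c[m - 1 := c ! (m - 1) - 1]" by auto
      have lc: "length c' = ncount M" using e len C by simp
      with step.IH C' obtain P where P: "strong_solution P ({#l L'#} + cnt c') ?G {#l 0#}" by auto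
      have m: "1 \<le> m" "m \<le> length c" using wfI Dec len C by (auto simp: instr_wf_def)
      have sub: "{#l i, r m#} \<subseteq># {#l L#} + cnt c"
        using m e by (auto simp: subseteq_mset_def count_cnt split: lit.splits)
      have eq: "{#l L#} + cnt c - {#l i, r m#} + {#l j#} = {#l L'#} + cnt c'"
        using m e by (auto simp: multiset_eq_iff count_cnt nth_list_update split: lit.splits)
      show ?thesis using P inPhi Dec C e eq sub
        by (intro exI[of _ "Step {#l i, r m#} {#l j#} P"]) auto
    next
      case (JPos i m j)
      with I(2) C C' have e: "L = i" "L' = j" "c ! (m - 1) > 0" "c' = c" by auto
      have lc: "length c' = ncount M" using e len C by simp
      with step.IH C' obtain P where P: "strong_solution P ({#l L'#} + cnt c') ?G {#l 0#}" by auto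
      have m: "1 \<le> m" "m \<le> length c" using wfI JPos len C by (auto simp: instr_wf_def)
      have sub: "{#l i, r m#} \<subseteq># {#l L#} + cnt c"
        using m e by (auto simp: subseteq_mset_def count_cnt split: lit.splits)
      have eq: "{#l L#} + cnt c - {#l i, r m#} + {#l j, r m#} = {#l L'#} + cnt c'"
        using m e by (auto simp: multiset_eq_iff count_cnt split: lit.splits)
      show ?thesis using P inPhi JPos C e eq sub
        by (intro exI[of _ "Step {#l i, r m#} {#l j, r m#} P"]) auto
    next
      case (JZ i m j)
      with I(2) C C' have e: "L = i" "L' = j" "c ! (m - 1) = 0" "c' = c" by auto
      have lc: "length c' = ncount M" using e len C by simp
      with step.IH C' obtain P where P: "strong_solution P ({#l L'#} + cnt c') ?G {#l 0#}" by auto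
      have m: "1 \<le> m" "m \<le> length c" using wfI JZ len C by (auto simp: instr_wf_def)
      have R: "\<forall>x \<in># cnt c. \<exists>i. x = r i \<and> 1 \<le> i \<and> i \<le> ncount M \<and> i \<noteq> m"
      proof
        fix x assume "x \<in># cnt c"
        hence "count (cnt c) x > 0" by simp
        then show "\<exists>i. x = r i \<and> 1 \<le> i \<and> i \<le> ncount M \<and> i \<noteq> m"
          using e len C by (auto simp: count_cnt split: lit.splits if_splits)
      qed
      obtain Q where Q: "strong_solution Q ({#kap m#} + cnt c) ?G {#l 0#}"
        using kap_elim[OF m(1) _ R, of M] m len C by auto
      have eq1: "{#l L#} + cnt c - {#l i#} + {#l j#} = {#l L'#} + cnt c'" using e by simp
      have eq2: "{#l L#} + cnt c - {#l i#} + {#kap m#} = {#kap m#} + cnt c" using e by simp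
      show ?thesis using P Q inPhi JZ C e eq1 eq2
        by (intro exI[of _ "Branch {#l i#} {#l j#} P {#kap m#} Q"]) auto
    next
      case Halt
      then show ?thesis using I(2) by simp
    qed
  qed
qed

theorem lemma2:
  fixes M :: minsky and ks :: "nat list"
  assumes "minsky_wf M"
    and "length ks = ncount M"
    and "reaches M (1, ks) (0, replicate (ncount M) 0)"
  shows "\<exists>P. strong_solution P (init_prod ks) (PhiM M \<union> Kall (ncount M)) {#l 0#}"
  using main[OF assms(1) assms(3)[unfolded reaches_def]] assms(2)
  by (simp add: init_prod_def cnt_def)

end
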